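(* For $n\in\{0,1,2,\dots\}$ and real $\Lambda$ with $\Lambda<j_{n,1}^2$, set \[ \sigma^{(\Lambda)}_{(n)}:=\begin{cases}\dfrac{\sqrt{-\Lambda}\,I_n'(\sqrt{-\Lambda})}{I_n(\sqrt{-\Lambda})},&\Lambda<0,\\ n,&\Lambda=0,\\ \dfrac{\sqrt{\Lambda}\,J_n'(\sqrt{\Lambda})}{J_n(\sqrt{\Lambda})},&\Lambda>0.\end{cases} \] Let $0\le n<m$ be integers. Then $\sigma^{(\Lambda)}_{(n)}<\sigma^{(\Lambda)}_{(m)}$ for all $\Lambda<j_{n,1}^2$. Consequently, for all $\Lambda<j_{0,1}^2=\lambda^{\mathrm{Dir}}_1(\mathbb{D})$ the eigenvalues of the Dirichlet-to-Neumann map $\mathcal{D}_\Lambda$ of the unit disk $\mathbb{D}$, listed in non-decreasing order with multiplicity, are $\sigma^{(\Lambda)}_k=\sigma^{(\Lambda)}_{(\lfloor (k+1)/2\rfloor)}$, $k\in\mathbb{N}$.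
   Context: $J_n$ and $I_n$ are the Bessel and modified Bessel functions of the first kind of order $n$; $j_{n,1}$ is the first positive zero of $J_n$, and $j_{n,1}<j_{m,1}$ for $n<m$. For the unit disk $\mathbb{D}\subset\mathbb{R}^2$ and $\Lambda$ not a Dirichlet eigenvalue, the Dirichlet-to-Neumann map $\mathcal{D}_\Lambda$ ($u\mapsto\partial_nU$ with $-\Delta U=\Lambda U$ in $\mathbb{D}$, $U|_{\partial\mathbb{D}}=u$) has eigenvalues $\sigma^{(\Lambda)}_{(0)}$ (simple, constant eigenfunction) and $\sigma^{(\Lambda)}_{(n)}$, $n\ge1$ (double, eigenfunctions $\cos n\theta,\sin n\theta$). *)

theory Defs
  imports "HOL-Analysis.Analysis"
begin

definition besselJ :: "nat \<Rightarrow> real \<Rightarrow> real" where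
  "besselJ n x = (\<Sum>k. (-1)^k / (fact k * fact (k + n)) * (x / 2) ^ (2 * k + n))"

definition besselI :: "nat \<Rightarrow> real \<Rightarrow> real" where
  "besselI n x = (\<Sum>k. 1 / (fact k * fact (k + n)) * (x / 2) ^ (2 * k + n))"

definition bessel_zero1 :: "nat \<Rightarrow> real" where
  "bessel_zero1 n = Inf {x. 0 < x \<and> besselJ n x = 0}"

definition dtn_sigma :: "nat \<Rightarrow> real \<Rightarrow> real" where
  "dtn_sigma n \<Lambda> =
     (if \<Lambda> < 0 then sqrt (-\<Lambda>) * deriv (besselI n) (sqrt (-\<Lambda>)) / besselI n (sqrt (-\<Lambda>))
      else if \<Lambda> = 0 then real n
      else sqrt \<Lambda> * deriv (besselJ n) (sqrt \<Lambda>) / besselJ n (sqrt \<Lambda>))"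

definition dtn_multiplicity :: "real \<Rightarrow> real \<Rightarrow> nat" where
  "dtn_multiplicity \<Lambda> v =
     (if dtn_sigma 0 \<Lambda> = v then 1 else 0) + 2 * card {n. 1 \<le> n \<and> dtn_sigma n \<Lambda> = v}"

end

theory Submission
  imports Defs
begin

definition hc :: "nat \<Rightarrow> nat \<Rightarrow> real" where
  "hc n k = (-1)^k / (fact k * fact (k+n) * 4^k)"

definition H :: "nat \<Rightarrow> real \<Rightarrow> real" where
  "H n x = (\<Sum>k. hc n k * x^k)"

lemma hc_bound: "norm (hc n k * x^k) \<le> inverse (fact k) * \<bar>x\<bar>^k"
proof -
  have "fact k * 1 \<le> fact k * (fact (k+n) * 4^k :: real)"
  proof (rule mult_left_mono)
    have "1 \<le> (fact (k+n)::real)" by simp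
    moreover have "(1::real) \<le> 4^k" by simp
    ultimately show "1 \<le> (fact (k+n) * 4^k :: real)" by (metis mult_mono' mult_1 zero_le_one)
  qed simp
  hence "\<bar>hc n k\<bar> \<le> inverse (fact k)"
    unfolding hc_def by (simp add: abs_mult abs_divide field_simps)
  thus ?thesis by (simp add: abs_mult power_abs mult_right_mono)
qed

lemma H_summable: "summable (\<lambda>k. hc n k * x^k)"
  apply (rule summable_comparison_test'[where g="\<lambda>k. inverse (fact k) * \<bar>x\<bar>^k"])
  using summable_exp[of "\<bar>x\<bar>"] hc_bound by auto

lemma diffs_hc: "diffs (hc n) = (\<lambda>k. - (1/4) * hc (Suc n) k)"
proof
  fix k
  have f: "(fact (Suc k) :: real) = real (Suc k) * fact k" by simp
  have "real (Suc k) * ((-1)^Suc k / (fact (Suc k) * fact (Suc (k+n)) * 4^Suc k))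
     = -(1/4) * ((-1)^k/(fact k * fact (Suc (k+n)) * 4^k))"
    unfolding f by (simp add: field_simps del: of_nat_Suc fact_Suc)
  thus "diffs (hc n) k = - (1/4) * hc (Suc n) k"
    unfolding diffs_def hc_def by simp
qed

lemma H_deriv: "(H n has_field_derivative (- H (Suc n) x / 4)) (at x)"
proof -
  have "((\<lambda>x. \<Sum>k. hc n k * x^k) has_field_derivative (\<Sum>k. diffs (hc n) k * x^k)) (at x)"
    by (rule termdiffs_strong_converges_everywhere) (rule H_summable)
  moreover have "(\<Sum>k. diffs (hc n) k * x^k) = - H (Suc n) x / 4"
    unfolding diffs_hc H_def using suminf_mult[OF H_summable, of "-(1/4)" "Suc n" x]
    by (simp add: mult.assoc)
  ultimately show ?thesis unfolding H_def[abs_def] by simp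
qed

lemma H_cont: "isCont (H n) x"
  using H_deriv DERIV_isCont by blast

lemma H_zero: "H n 0 = 1 / fact n"
  unfolding H_def using powser_zero[of "hc n"] by (simp add: hc_def)

lemma H_pos_nonpos: assumes "x \<le> 0" shows "H n x > 0"
proof -
  have nn: "0 \<le> hc n k * x^k" for k
  proof -
    have "hc n k * x^k = (-x)^k / (fact k * fact (k+n) * 4^k)"
      unfolding hc_def by (simp add: power_minus')
    thus ?thesis using assms by simp
  qed
  have "sum (\<lambda>k. hc n k * x^k) {0} \<le> H n x"
    unfolding H_def by (rule sum_le_suminf[OF H_summable]) (use nn in auto)
  moreover have "hc n 0 * x^0 > 0" by (simp add: hc_def)
  ultimately show ?thesis by simp
qed

lemma hc_rec0: "hc k 0 = real (Suc k) * hc (Suc k) 0"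
  unfolding hc_def by (simp add: field_simps del: of_nat_Suc)

lemma hc_rec: "hc k (Suc i) = real (Suc k) * hc (Suc k) (Suc i) - hc (Suc (Suc k)) i / 4"
proof -
  have f1: "(fact (Suc i) :: real) = real (Suc i) * fact i" by simp
  have f2: "(fact (Suc i + Suc k) :: real) = real (Suc i + Suc k) * fact (Suc i + k)"
    by (metis add_Suc_right fact_Suc)
  have f3: "(fact (i + Suc (Suc k)) :: real) = fact (Suc i + Suc k)" by simp
  show ?thesis unfolding hc_def f3 f2 f1
    apply (simp add: field_simps del: of_nat_Suc fact_Suc)
    apply (simp add: algebra_simps)
    done
qed

lemma H_rec: "H k x = real (Suc k) * H (Suc k) x - x * H (Suc (Suc k)) x / 4"
proof -
  define g where "g j = (if j = 0 then 0 else hc (Suc (Suc k)) (j-1) * x^j)" for j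
  have "(\<lambda>j. g (Suc j)) = (\<lambda>i. x * (hc (Suc (Suc k)) i * x^i))"
    by (auto simp: g_def)
  hence "(\<lambda>j. g (Suc j)) sums (x * H (Suc (Suc k)) x)"
    unfolding H_def by (simp add: sums_mult summable_sums H_summable)
  hence "g sums (x * H (Suc (Suc k)) x + g 0)"
    by (simp only: sums_Suc_iff)
  hence gs: "g sums (x * H (Suc (Suc k)) x)"
    by (simp add: g_def)
  have "(\<lambda>j. real (Suc k) * (hc (Suc k) j * x^j) - g j / 4) sums
        (real (Suc k) * H (Suc k) x - x * H (Suc (Suc k)) x / 4)"
  proof -
    have hs: "(\<lambda>j. hc (Suc k) j * x^j) sums H (Suc k) x"
      unfolding H_def by (rule summable_sums[OF H_summable])
    show ?thesis by (intro sums_diff sums_mult sums_divide gs hs)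
  qed
  moreover have "(\<lambda>j. real (Suc k) * (hc (Suc k) j * x^j) - g j / 4) = (\<lambda>j. hc k j * x^j)"
  proof
    fix j show "real (Suc k) * (hc (Suc k) j * x^j) - g j / 4 = hc k j * x^j"
    proof (cases j)
      case 0 thus ?thesis using hc_rec0[of k] by (simp add: g_def)
    next
      case (Suc i)
      have "real (Suc k) * (hc (Suc k) j * x^j) - g j / 4
         = (real (Suc k) * hc (Suc k) (Suc i) - hc (Suc (Suc k)) i / 4) * x^j"
        by (simp add: g_def Suc algebra_simps)
      also have "\<dots> = hc k j * x^j" by (simp only: hc_rec[symmetric] Suc)
      finally show ?thesis .
    qed
  qed
  ultimately show ?thesis unfolding H_def using sums_unique by (metis summable_sums H_summable)
qed

lemma besselJ_H: "besselJ n x = (x/2)^n * H n (x^2)"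
proof -
  have "(\<lambda>k. (-1)^k / (fact k * fact (k + n)) * (x / 2) ^ (2 * k + n))
      = (\<lambda>k. (x/2)^n * (hc n k * (x^2)^k))"
  proof
    fix k
    have "(x/2)^(2*k+n) = ((x/2)^2)^k * (x/2)^n" by (simp add: power_add power_mult)
    also have "(x/2)^2 = x^2/4" by (simp add: power_divide)
    also have "(x^2/4)^k = (x^2)^k/4^k" by (simp add: power_divide)
    finally have "(x/2)^(2*k+n) = (x/2)^n * ((x^2)^k / 4^k)" by simp
    thus "(-1)^k / (fact k * fact (k + n)) * (x / 2) ^ (2 * k + n) = (x/2)^n * (hc n k * (x^2)^k)"
      unfolding hc_def by simp
  qed
  thus ?thesis unfolding besselJ_def H_def by (simp add: suminf_mult H_summable)
qed

lemma besselI_H: "besselI n x = (x/2)^n * H n (-(x^2))"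
proof -
  have "(\<lambda>k. 1 / (fact k * fact (k + n)) * (x / 2) ^ (2 * k + n))
      = (\<lambda>k. (x/2)^n * (hc n k * (-(x^2))^k))"
  proof
    fix k
    have "(x/2)^(2*k+n) = ((x/2)^2)^k * (x/2)^n" by (simp add: power_add power_mult)
    also have "(x/2)^2 = x^2/4" by (simp add: power_divide)
    also have "(x^2/4)^k = (x^2)^k/4^k" by (simp add: power_divide)
    finally have "(x/2)^(2*k+n) = (x/2)^n * ((x^2)^k / 4^k)" by simp
    moreover have "(-1::real)^k * (-(x^2))^k = (x^2)^k"
      by (metis mult_minus1 power_mult_distrib minus_mult_minus mult_1 power_minus)
    ultimately show "1 / (fact k * fact (k + n)) * (x / 2) ^ (2 * k + n) = (x/2)^n * (hc n k * (-(x^2))^k)"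
      unfolding hc_def by (simp add: field_simps)
  qed
  thus ?thesis unfolding besselI_def H_def by (simp add: suminf_mult H_summable)
qed

definition sig :: "nat \<Rightarrow> real \<Rightarrow> real" where
  "sig n L = real n - L * H (Suc n) L / (2 * H n L)"

lemma deriv_J: "deriv (besselJ n) x = real n * (x/2)^(n-1) / 2 * H n (x^2) + (x/2)^n * (- H (Suc n) (x^2) / 4 * (2*x))"
proof -
  have e: "besselJ n = (\<lambda>x. (x/2)^n * H n (x^2))" using besselJ_H by auto
  have "((\<lambda>x. (x/2)^n * H n (x^2)) has_real_derivative
     (real n * (x/2)^(n-1) / 2 * H n (x^2) + (x/2)^n * (- H (Suc n) (x^2) / 4 * (2*x)))) (at x)"
  proof -
    have d1: "((\<lambda>x. (x/2)^n) has_real_derivative (real n * (x/2)^(n-1) / 2)) (at x)"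
      by (auto intro!: derivative_eq_intros)
    have d2: "((\<lambda>x. H n (x^2)) has_real_derivative (- H (Suc n) (x^2) / 4 * (2*x))) (at x)"
      by (rule DERIV_chain2[OF H_deriv]) (auto intro!: derivative_eq_intros)
    show ?thesis using DERIV_mult[OF d1 d2] by (simp add: mult.commute)
  qed
  thus ?thesis unfolding e by (rule DERIV_imp_deriv)
qed

lemma deriv_I: "deriv (besselI n) x = real n * (x/2)^(n-1) / 2 * H n (-(x^2)) + (x/2)^n * (- H (Suc n) (-(x^2)) / 4 * (-(2*x)))"
proof -
  have e: "besselI n = (\<lambda>x. (x/2)^n * H n (-(x^2)))" using besselI_H by auto
  have "((\<lambda>x. (x/2)^n * H n (-(x^2))) has_real_derivative
     (real n * (x/2)^(n-1) / 2 * H n (-(x^2)) + (x/2)^n * (- H (Suc n) (-(x^2)) / 4 * (-(2*x))))) (at x)"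
  proof -
    have d1: "((\<lambda>x. (x/2)^n) has_real_derivative (real n * (x/2)^(n-1) / 2)) (at x)"
      by (auto intro!: derivative_eq_intros)
    have d2: "((\<lambda>x. H n (-(x^2))) has_real_derivative (- H (Suc n) (-(x^2)) / 4 * (-(2*x)))) (at x)"
      by (rule DERIV_chain2[OF H_deriv]) (auto intro!: derivative_eq_intros)
    show ?thesis using DERIV_mult[OF d1 d2] by (simp add: mult.commute)
  qed
  thus ?thesis unfolding e by (rule DERIV_imp_deriv)
qed

lemma xpow: "x * (real n * (x/2)^(n-1) / 2) = real n * (x/2)^n"
  by (cases n) (auto simp: field_simps)

lemma dtn_sig: assumes "H n L \<noteq> 0" shows "dtn_sigma n L = sig n L"
proof -
  consider "L < 0" | "L = 0" | "L > 0" by linarith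
  thus ?thesis
  proof cases
    case 1
    define x where "x = sqrt (-L)"
    have x: "x > 0" "x^2 = -L" "-(x^2) = L" using 1 by (auto simp: x_def)
    have "dtn_sigma n L = x * deriv (besselI n) x / besselI n x"
      using 1 by (simp add: dtn_sigma_def x_def)
    also have "\<dots> = sig n L"
    proof -
      have "x * deriv (besselI n) x = (x * (real n * (x/2)^(n-1)/2)) * H n (-(x^2)) + (x/2)^n * H (Suc n) (-(x^2)) * (x^2) / 2"
        unfolding deriv_I by (simp add: algebra_simps power2_eq_square)
      also have "\<dots> = (x/2)^n * (real n * H n L - L * H (Suc n) L / 2)"
        unfolding xpow x(3) x(2) by (simp add: algebra_simps)
      finally have e: "x * deriv (besselI n) x = (x/2)^n * (real n * H n L - L * H (Suc n) L / 2)" .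
      have p: "(x/2)^n \<noteq> 0" using x by simp
      show ?thesis unfolding e besselI_H x(3) sig_def using p assms by (simp add: field_simps)
    qed
    finally show ?thesis .
  next
    case 2 thus ?thesis by (simp add: dtn_sigma_def sig_def)
  next
    case 3
    define x where "x = sqrt L"
    have x: "x > 0" "x^2 = L" using 3 by (auto simp: x_def)
    have "dtn_sigma n L = x * deriv (besselJ n) x / besselJ n x"
      using 3 by (simp add: dtn_sigma_def x_def)
    also have "\<dots> = sig n L"
    proof -
      have "x * deriv (besselJ n) x = (x * (real n * (x/2)^(n-1)/2)) * H n (x^2) - (x/2)^n * H (Suc n) (x^2) * (x^2) / 2"
        unfolding deriv_J by (simp add: algebra_simps power2_eq_square)
      also have "\<dots> = (x/2)^n * (real n * H n L - L * H (Suc n) L / 2)"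
        unfolding xpow x(2) by (simp add: algebra_simps)
      finally have e: "x * deriv (besselJ n) x = (x/2)^n * (real n * H n L - L * H (Suc n) L / 2)" .
      have p: "(x/2)^n \<noteq> 0" using x by simp
      show ?thesis unfolding e besselJ_H x(2) sig_def using p assms by (simp add: field_simps)
    qed
    finally show ?thesis .
  qed
qed

lemma H_deriv': "(H n has_field_derivative (- H (Suc n) x / 4)) (at x within s)"
  using H_deriv has_field_derivative_at_within by blast

definition WW :: "nat \<Rightarrow> nat \<Rightarrow> real \<Rightarrow> real" where
  "WW n m x = (real m - real n) * H n x * H m x - x/2 * (H (Suc m) x * H n x - H (Suc n) x * H m x)"

definition WWd :: "nat \<Rightarrow> nat \<Rightarrow> real \<Rightarrow> real" where
  "WWd n m x = (real m - real n) * ((- H (Suc n) x / 4) * H m x + H n x * (- H (Suc m) x / 4))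
     - 1/2 * (H (Suc m) x * H n x - H (Suc n) x * H m x)
     - x/2 * ((- H (Suc (Suc m)) x / 4) * H n x + H (Suc m) x * (- H (Suc n) x / 4)
              - ((- H (Suc (Suc n)) x / 4) * H m x + H (Suc n) x * (- H (Suc m) x / 4)))"

lemma WW_deriv: "(WW n m has_field_derivative WWd n m x) (at x)"
  unfolding WW_def[abs_def] WWd_def
  apply (auto intro!: derivative_eq_intros H_deriv')
  apply (simp add: field_simps)
  done

lemma WW_ident: "x * WWd n m x + (real m + real n)/2 * WW n m x = (real m ^ 2 - real n ^ 2)/2 * H n x * H m x"
proof -
  define A where "A = H n x"
  define A1 where "A1 = H (Suc n) x"
  define A2 where "A2 = H (Suc (Suc n)) x"
  define B where "B = H m x"
  define B1 where "B1 = H (Suc m) x"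
  define B2 where "B2 = H (Suc (Suc m)) x"
  have eA: "x * A2 - 4 * (real n + 1) * A1 + 4 * A = 0"
    using H_rec[of n x] unfolding A_def A1_def A2_def by (simp add: algebra_simps)
  have eB: "x * B2 - 4 * (real m + 1) * B1 + 4 * B = 0"
    using H_rec[of m x] unfolding B_def B1_def B2_def by (simp add: algebra_simps)
  have "x * WWd n m x + (real m + real n)/2 * WW n m x - (real m ^ 2 - real n ^ 2)/2 * H n x * H m x
     = (x/8) * ((x * B2 - 4 * (real m + 1) * B1 + 4 * B) * A - (x * A2 - 4 * (real n + 1) * A1 + 4 * A) * B)"
    unfolding WWd_def WW_def A_def A1_def A2_def B_def B1_def B2_def
    by (simp add: field_simps power2_eq_square)
  also have "\<dots> = 0" using eA eB by simp
  finally show ?thesis by simp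
qed

lemma sig_diff: assumes "H n L \<noteq> 0" "H m L \<noteq> 0"
  shows "sig m L - sig n L = WW n m L / (H n L * H m L)"
  unfolding sig_def WW_def using assms by (simp add: field_simps)

lemma growth:
  fixes W Wd :: "real \<Rightarrow> real" and a \<alpha> :: real
  assumes a: "a > 0" and al: "\<alpha> > 0" and d: "\<And>t. (W has_real_derivative Wd t) (at t)"
    and W0: "W 0 > 0" and P: "\<And>t. 0 < t \<Longrightarrow> t < a \<Longrightarrow> t * Wd t + \<alpha> * W t > 0"
  shows "W a > 0"
proof -
  have "W \<midarrow>0\<rightarrow> W 0" using d DERIV_isCont isCont_def by blast
  then obtain r where r: "r > 0" "\<And>x. x \<noteq> 0 \<and> \<bar>0 - x\<bar> < r \<Longrightarrow> 0 < W x"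
    using LIM_fun_gt_zero[OF _ W0] by blast
  define s where "s = min a r / 2"
  have s: "0 < s" "s < a" "W s > 0" using r a by (auto simp: s_def intro!: r(2))
  define Phi where "Phi t = t powr \<alpha> * W t" for t
  define Phid where "Phid t = \<alpha> * t powr (\<alpha> - 1) * W t + t powr \<alpha> * Wd t" for t
  have der: "(Phi has_real_derivative Phid t) (at t)" if "s \<le> t" for t
  proof -
    have "t > 0" using that s by simp
    from DERIV_mult[OF has_real_derivative_powr[OF this, of \<alpha>] d[of t]]
    show ?thesis unfolding Phi_def[abs_def] Phid_def by (simp add: algebra_simps)
  qed
  obtain z where z: "s < z" "z < a" "Phi a - Phi s = (a - s) * Phid z"
    using MVT2[OF s(2), of Phi Phid] der by auto
  have zpos: "z > 0" using z s by simp
  have "Phid z = z powr (\<alpha> - 1) * (z * Wd z + \<alpha> * W z)"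
  proof -
    have "z powr (\<alpha> - 1) * z powr 1 = z powr \<alpha>"
      by (subst powr_add[symmetric]) simp
    hence "z powr \<alpha> = z powr (\<alpha> - 1) * z" using zpos by (simp add: powr_one)
    thus ?thesis unfolding Phid_def by (simp add: algebra_simps)
  qed
  also have "\<dots> > 0" using P[of z] zpos z by simp
  finally have "Phi a > Phi s" using z s by (smt (verit) mult_pos_pos)
  moreover have "Phi s > 0" unfolding Phi_def using s by simp
  ultimately have "a powr \<alpha> * W a > 0" unfolding Phi_def by simp
  thus ?thesis using a by (simp add: zero_less_mult_iff)
qed


lemma H_contin: "continuous_on S (H n)"
  using H_cont continuous_at_imp_continuous_on by blast

lemma WW0: "n < m \<Longrightarrow> WW n m 0 > 0"
  unfolding WW_def by (simp add: H_zero)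

lemma ident_pos:
  assumes nm: "n < m" and "H n t > 0" "H m t > 0"
  shows "t * WWd n m t + (real m + real n) / 2 * WW n m t > 0"
proof -
  have "real n ^ 2 < real m ^ 2" using nm by (simp add: power_strict_mono)
  thus ?thesis unfolding WW_ident using assms by simp
qed

lemma core_neg:
  assumes nm: "n < m" and L: "L < 0"
  shows "WW n m L > 0"
proof -
  define W where "W t = WW n m (-t)" for t
  define Wd where "Wd t = - WWd n m (-t)" for t
  have d: "(W has_real_derivative Wd t) (at t)" for t
  proof -
    have "((\<lambda>t. WW n m (-t)) has_real_derivative WWd n m (-t) * (-1)) (at t)"
      by (rule DERIV_chain2[OF WW_deriv]) (auto intro!: derivative_eq_intros)
    thus ?thesis unfolding W_def[abs_def] Wd_def by simp
  qed
  have "W (-L) > 0"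
  proof (rule growth[where \<alpha> = "(real m + real n)/2" and W = W and Wd = Wd and a = "-L"])
    show "0 < -L" using L by simp
    show "0 < (real m + real n)/2" using nm by simp
    show "(W has_real_derivative Wd t) (at t)" for t by (rule d)
    show "0 < W 0" using WW0[OF nm] by (simp add: W_def)
    show "0 < t * Wd t + (real m + real n) / 2 * W t" if "0 < t" "t < -L" for t
      using ident_pos[OF nm, of "-t"] H_pos_nonpos[of "-t" n] H_pos_nonpos[of "-t" m] that
      unfolding W_def Wd_def by simp
  qed
  thus ?thesis by (simp add: W_def)
qed

lemma core_pos:
  assumes nm: "n < m" and L: "L > 0" and nz: "\<And>\<mu>. 0 < \<mu> \<Longrightarrow> \<mu> \<le> L \<Longrightarrow> H n \<mu> \<noteq> 0"
  shows "H n L > 0 \<and> H m L > 0 \<and> WW n m L > 0"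
proof -
  have Hn: "H n \<mu> > 0" if mu: "0 \<le> \<mu>" "\<mu> \<le> L" for \<mu>
  proof (rule ccontr)
    assume "\<not> H n \<mu> > 0"
    hence "H n \<mu> \<le> 0" by simp
    moreover have "0 \<le> H n 0" by (simp add: H_zero)
    ultimately obtain x where x: "0 \<le> x" "x \<le> \<mu>" "H n x = 0"
      using IVT2'[of "H n" \<mu> 0 0] mu H_contin by blast
    have "x \<noteq> 0" using x(3) by (auto simp: H_zero)
    thus False using nz[of x] x mu by simp
  qed
  have Hm: "H m \<mu> > 0" if "0 \<le> \<mu>" "\<mu> \<le> L" for \<mu>
  proof (rule ccontr)
    assume "\<not> H m \<mu> > 0"
    define Z where "Z = {0..L} \<inter> {x. H m x \<le> 0}"
    have Zne: "Z \<noteq> {}" using that \<open>\<not> H m \<mu> > 0\<close> by (auto simp: Z_def)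
    have "closed {x. H m x \<le> 0}"
      by (rule closed_Collect_le) (auto intro: H_contin)
    hence Zc: "closed Z" unfolding Z_def by auto
    have Zb: "bdd_below Z" unfolding Z_def by auto
    define t0 where "t0 = Inf Z"
    have t0Z: "t0 \<in> Z" unfolding t0_def by (rule closed_contains_Inf[OF Zne Zb Zc])
    have below: "H m x > 0" if "0 \<le> x" "x < t0" for x
    proof (rule ccontr)
      assume "\<not> H m x > 0"
      hence "x \<in> Z" using that t0Z by (auto simp: Z_def)
      hence "t0 \<le> x" unfolding t0_def by (rule cInf_lower[OF _ Zb])
      thus False using that by simp
    qed
    have t0: "0 \<le> t0" "t0 \<le> L" "H m t0 \<le> 0" using t0Z by (auto simp: Z_def)
    have Hm0: "H m 0 > 0" by (simp add: H_zero)
    have "t0 \<noteq> 0" using t0(3) Hm0 by auto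
    hence t0p: "t0 > 0" using t0 by simp
    have Hmt0: "H m t0 = 0"
    proof -
      have "0 \<le> H m 0" by (simp add: H_zero)
      then obtain x where x: "0 \<le> x" "x \<le> t0" "H m x = 0"
        using IVT2'[of "H m" t0 0 0] t0 H_contin by auto
      have "x \<in> Z" using x t0 by (auto simp: Z_def)
      hence "t0 \<le> x" unfolding t0_def by (rule cInf_lower[OF _ Zb])
      thus ?thesis using x by simp
    qed
    have Wpos: "WW n m t0 > 0"
    proof (rule growth[where \<alpha> = "(real m + real n)/2" and Wd = "WWd n m" and W = "WW n m" and a = t0])
      show "0 < t0" by (rule t0p)
      show "0 < (real m + real n)/2" using nm by simp
      show "(WW n m has_real_derivative WWd n m t) (at t)" for t by (rule WW_deriv)
      show "0 < WW n m 0" by (rule WW0[OF nm])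
      show "0 < t * WWd n m t + (real m + real n) / 2 * WW n m t" if "0 < t" "t < t0" for t
        using that t0 by (intro ident_pos nm Hn below) auto
    qed
    have "H (Suc m) t0 \<ge> 0"
    proof (rule ccontr)
      assume "\<not> H (Suc m) t0 \<ge> 0"
      hence "- H (Suc m) t0 / 4 > 0" by simp
      from DERIV_pos_inc_left[OF H_deriv this] obtain d where
        d: "d > 0" "\<And>h. h > 0 \<Longrightarrow> h < d \<Longrightarrow> H m (t0 - h) < H m t0" by blast
      define h where "h = min d t0 / 2"
      have "H m (t0 - h) < 0" using d(2)[of h] d(1) t0p Hmt0 by (simp add: h_def)
      moreover have "H m (t0 - h) > 0" using d(1) t0p by (intro below) (auto simp: h_def)
      ultimately show False by simp
    qed
    moreover have "H n t0 > 0" using t0 by (intro Hn) auto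
    ultimately have "WW n m t0 \<le> 0" unfolding WW_def Hmt0 using t0p
      by (simp add: mult_nonneg_nonneg)
    thus False using Wpos by simp
  qed
  have "WW n m L > 0"
  proof (rule growth[where \<alpha> = "(real m + real n)/2" and Wd = "WWd n m" and W = "WW n m" and a = L])
    show "0 < L" by (rule L)
    show "0 < (real m + real n)/2" using nm by simp
    show "(WW n m has_real_derivative WWd n m t) (at t)" for t by (rule WW_deriv)
    show "0 < WW n m 0" by (rule WW0[OF nm])
    show "0 < t * WWd n m t + (real m + real n) / 2 * WW n m t" if "0 < t" "t < L" for t
      using that by (intro ident_pos nm Hn Hm) auto
  qed
  thus ?thesis using Hn Hm L by simp
qed

lemma sig_lt:
  assumes nm: "n < m" and h: "L \<le> 0 \<or> (\<forall>\<mu>. 0 < \<mu> \<and> \<mu> \<le> L \<longrightarrow> H n \<mu> \<noteq> 0)"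
  shows "dtn_sigma n L < dtn_sigma m L \<and> (L \<le> 0 \<or> (\<forall>\<mu>. 0 < \<mu> \<and> \<mu> \<le> L \<longrightarrow> H m \<mu> \<noteq> 0))"
proof -
  consider "L < 0" | "L = 0" | "L > 0" by linarith
  thus ?thesis
  proof cases
    case 1
    have p: "H n L > 0" "H m L > 0" using 1 by (auto intro!: H_pos_nonpos)
    have "sig m L - sig n L > 0"
      using sig_diff[of n L m] p core_neg[OF nm 1] by simp
    thus ?thesis using dtn_sig[of n L] dtn_sig[of m L] p 1 by simp
  next
    case 2 thus ?thesis using nm by (simp add: dtn_sigma_def)
  next
    case 3
    have nz: "\<And>\<mu>. 0 < \<mu> \<Longrightarrow> \<mu> \<le> L \<Longrightarrow> H n \<mu> \<noteq> 0" using h 3 by auto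
    have c: "H n L > 0" "H m L > 0" "WW n m L > 0" using core_pos[OF nm 3 nz] by auto
    have "sig m L - sig n L > 0"
      using sig_diff[of n L m] c by simp
    moreover have "\<forall>\<mu>. 0 < \<mu> \<and> \<mu> \<le> L \<longrightarrow> H m \<mu> \<noteq> 0"
    proof (intro allI impI)
      fix \<mu> assume \<mu>: "0 < \<mu> \<and> \<mu> \<le> L"
      have "H m \<mu> > 0" using core_pos[OF nm, of \<mu>] \<mu> nz by auto
      thus "H m \<mu> \<noteq> 0" by simp
    qed
    ultimately show ?thesis using dtn_sig[of n L] dtn_sig[of m L] c by simp
  qed
qed

lemma Hnz:
  assumes L: "L < (bessel_zero1 n)\<^sup>2" and \<mu>: "0 < \<mu>" "\<mu> \<le> L"
  shows "H n \<mu> \<noteq> 0"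
proof
  assume H0: "H n \<mu> = 0"
  define x where "x = sqrt \<mu>"
  have x: "x > 0" "x^2 = \<mu>" using \<mu> by (auto simp: x_def)
  define S where "S = {x. 0 < x \<and> besselJ n x = 0}"
  have xS: "x \<in> S" unfolding S_def using x H0 by (simp add: besselJ_H)
  have Sb: "bdd_below S" unfolding S_def by (auto intro: bdd_belowI[of _ 0])
  have b1: "bessel_zero1 n \<le> x" unfolding bessel_zero1_def S_def[symmetric]
    by (rule cInf_lower[OF xS Sb])
  have b0: "0 \<le> bessel_zero1 n" unfolding bessel_zero1_def S_def[symmetric]
    using xS by (intro cInf_greatest) (auto simp: S_def)
  have "(bessel_zero1 n)\<^sup>2 \<le> x^2" using b0 b1 by (simp add: power_mono)
  thus False using x L \<mu> by simp
qed


lemma all_good: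
  assumes L: "L < (bessel_zero1 0)\<^sup>2"
  shows "L \<le> 0 \<or> (\<forall>\<mu>. 0 < \<mu> \<and> \<mu> \<le> L \<longrightarrow> H n \<mu> \<noteq> 0)"
proof (cases n)
  case 0 thus ?thesis using Hnz[OF L] by auto
next
  case (Suc p)
  have "L \<le> 0 \<or> (\<forall>\<mu>. 0 < \<mu> \<and> \<mu> \<le> L \<longrightarrow> H 0 \<mu> \<noteq> 0)" using Hnz[OF L] by auto
  thus ?thesis using sig_lt[of 0 n L] Suc by auto
qed

lemma card_two: "{k::nat. (k + 1) div 2 = Suc p} = {2*p+1, 2*p+2}"
  by auto

theorem mainTheorem14:
  shows "(\<forall>n m \<Lambda>. n < m \<and> \<Lambda> < (bessel_zero1 n)\<^sup>2 \<longrightarrow> dtn_sigma n \<Lambda> < dtn_sigma m \<Lambda>)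
    \<and> (\<forall>\<Lambda>. \<Lambda> < (bessel_zero1 0)\<^sup>2 \<longrightarrow>
         mono (\<lambda>k::nat. dtn_sigma ((k + 1) div 2) \<Lambda>)
       \<and> (\<forall>v. card {k::nat. dtn_sigma ((k + 1) div 2) \<Lambda> = v} = dtn_multiplicity \<Lambda> v))"
proof (intro conjI allI impI)
  fix n m :: nat and L :: real
  assume a: "n < m \<and> L < (bessel_zero1 n)\<^sup>2"
  have "L \<le> 0 \<or> (\<forall>\<mu>. 0 < \<mu> \<and> \<mu> \<le> L \<longrightarrow> H n \<mu> \<noteq> 0)" using Hnz[of L n] a by auto
  thus "dtn_sigma n L < dtn_sigma m L" using sig_lt[of n m L] a by auto
next
  fix L :: real assume L: "L < (bessel_zero1 0)\<^sup>2"
  define f where "f n = dtn_sigma n L" for n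
  have sm: "strict_mono f" unfolding strict_mono_def f_def
    using sig_lt all_good[OF L] by blast
  show "mono (\<lambda>k::nat. dtn_sigma ((k + 1) div 2) L)"
  proof (rule monoI)
    fix k k' :: nat assume "k \<le> k'"
    hence "(k + 1) div 2 \<le> (k' + 1) div 2" by (simp add: div_le_mono)
    thus "dtn_sigma ((k + 1) div 2) L \<le> dtn_sigma ((k' + 1) div 2) L"
      using strict_mono_less_eq[OF sm] unfolding f_def by blast
  next
  qed
  fix v
  have inj: "f a = f b \<longleftrightarrow> a = b" for a b using strict_mono_eq[OF sm] .
  show "card {k::nat. dtn_sigma ((k + 1) div 2) L = v} = dtn_multiplicity L v"
  proof (cases "\<exists>p. f p = v")
    case False
    hence s1: "{k::nat. dtn_sigma ((k + 1) div 2) L = v} = {}"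
      and s2: "{n. 1 \<le> n \<and> dtn_sigma n L = v} = {}"
      and s3: "dtn_sigma 0 L \<noteq> v" unfolding f_def by auto
    show ?thesis unfolding dtn_multiplicity_def s1 s2 using s3 by simp
  next
    case True
    then obtain p where p: "f p = v" by blast
    have e1: "{k::nat. dtn_sigma ((k + 1) div 2) L = v} = {k::nat. (k + 1) div 2 = p}"
      using inj p unfolding f_def by auto
    have e2: "{n. 1 \<le> n \<and> dtn_sigma n L = v} = (if p = 0 then {} else {p})"
      using inj p unfolding f_def by auto
    have e3: "dtn_sigma 0 L = v \<longleftrightarrow> p = 0" using inj[of 0 p] p unfolding f_def by auto
    show ?thesis
    proof (cases p)
      case 0
      have "{k::nat. (k + 1) div 2 = p} = {0}" using 0 by auto
      thus ?thesis unfolding dtn_multiplicity_def e1 e2 e3 using 0 by simp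
    next
      case (Suc q)
      show ?thesis unfolding dtn_multiplicity_def e1 e2 e3 using Suc card_two[of q] by simp
    qed
  qed
qed

end
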